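(* Let $J-CI=L^{(1)}\cdots L^{(p)}U$ be a Darboux factorization and, for each $j=0,1,\ldots,p$, let $\nu^{(j)}=(\nu^{(j)}_1,\ldots,\nu^{(j)}_p)$ be a vector of $p$-orthogonality for $\{P^{(j)}_n\}$. Then for each $j=0,1,\ldots,p-1$: (a) $\big(\nu^{(j+1)}_1,\ldots,\nu^{(j+1)}_{p-1},\,(z-C)\nu^{(j)}_1\big)$ is a vector of $p$-orthogonality for $\{P^{(j+1)}_n\}$; (b) $\big(\nu^{(j)}_1,\,\nu^{(j+1)}_1,\ldots,\nu^{(j+1)}_{p-1}\big)$ is a vector of $p$-orthogonality for $\{P^{(j)}_n\}$.
   Context: Fix $p\in\mathbb{N}$. Let $J=(a_{n,m})_{n,m\ge0}$ be an infinite matrix with $a_{n,n+1}=1$, $a_{n,m}=0$ for $m>n+1$ or $m<n-p$, and $a_{n+p,n}\neq0$ for all $n\ge0$. Define polynomials by $P_{-p}=\cdots=P_{-1}=0$, $P_0\equiv1$, $P_{n+1}(z)=(z-a_{n,n})P_n(z)-\sum_{i=1}^p a_{n,n-i}P_{n-i}(z)$ for $n\ge0$. Fix $C\in\mathbb{C}$ with $P_n(C)\neq0$ for all $n\ge1$. A Darboux factorization of $J-CI$ is a factorization $J-CI=L^{(1)}L^{(2)}\cdots L^{(p)}U$ where, indexing rows and columns by $1,2,\ldots$, $U$ is upper bidiagonal with $U_{k,k}=\gamma_{(k-1)(p+1)+1}$, $U_{k,k+1}=1$, and for $j=1,\ldots,p$, $L^{(j)}$ is lower bidiagonal with ones on the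 diagonal and $L^{(j)}_{k+1,k}=\gamma_{(k-1)(p+1)+j+1}\neq0$ for all $k\ge1$ (the $\gamma_i$ being complex numbers). Its Darboux transformations are $J^{(j)}=CI+L^{(j+1)}\cdots L^{(p)}UL^{(1)}\cdots L^{(j)}$, $j=1,\ldots,p$; also $J^{(0)}:=J$. Each $J^{(j)}$ is lower Hessenberg with ones on the superdiagonal, and $\{P^{(j)}_n\}_{n\ge0}$ denotes the unique sequence of polynomials with $P^{(j)}_0\equiv1$ such that $v^{(j)}(z)=(P^{(j)}_0(z),P^{(j)}_1(z),\ldots)^T$ satisfies $J^{(j)}v^{(j)}(z)=zv^{(j)}(z)$; $P^{(0)}_n=P_n$. A vector of $p$-orthogonality for a sequence of polynomials $\{Q_n\}$ is a vector $(\nu_1,\ldots,\nu_p)$ of linear functionals on polynomials with, for each $r=1,\ldots,p$ and $k=0,1,\ldots$: $\nu_r[z^kQ_n]=0$ for all $n\ge kp+r$, and $\nu_r[z^kQ_{kp+r-1}]\neq0$. For a functional $\mu$, $(z-C)\mu$ is the functional $q\mapsto\mu[(z-C)q]$. *)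

theory Defs
  imports "HOL-Computational_Algebra.Polynomial"
begin

text \<open>Infinite matrices, rows and columns indexed from 0 (paper index k corresponds to k-1 here).\<close>
type_synonym imat = "nat \<Rightarrow> nat \<Rightarrow> complex"

text \<open>Product of row-finite infinite matrices (all matrices below are row-finite).\<close>
definition mmul :: "imat \<Rightarrow> imat \<Rightarrow> imat" where
  "mmul A B = (\<lambda>n m. \<Sum>k\<in>{k. A n k \<noteq> 0}. A n k * B k m)"

definition idm :: imat where
  "idm = (\<lambda>n m. if n = m then 1 else 0)"

definition mprod :: "imat list \<Rightarrow> imat" where
  "mprod Ms = foldr mmul Ms idm"

definition banded_hessenberg :: "nat \<Rightarrow> imat \<Rightarrow> bool" where
  "banded_hessenberg p J \<longleftrightarrow>
     (\<forall>n. J n (n+1) = 1) \<and>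
     (\<forall>n m. m > n + 1 \<or> m + p < n \<longrightarrow> J n m = 0) \<and>
     (\<forall>n. J (n+p) n \<noteq> 0)"

text \<open>Polynomials P_n with P_0 = 1 determined by H v(z) = z v(z) for a lower Hessenberg
  matrix H with ones on the superdiagonal:
  P_(n+1) = z P_n - sum_(m<=n) H(n,m) P_m.  For J this is the paper's recurrence.\<close>
fun hpoly :: "imat \<Rightarrow> nat \<Rightarrow> complex poly" where
  "hpoly H 0 = 1"
| "hpoly H (Suc n) = [:0, 1:] * hpoly H n - (\<Sum>m\<in>{..n}. smult (H n m) (hpoly H m))"

text \<open>Darboux factors built from gamma (paper's indices of gamma are kept).\<close>
definition Umat :: "nat \<Rightarrow> (nat \<Rightarrow> complex) \<Rightarrow> imat" where
  "Umat p \<gamma> = (\<lambda>n m. if m = n then \<gamma> (n*(p+1)+1) else if m = n+1 then 1 else 0)"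

definition Lmat :: "nat \<Rightarrow> (nat \<Rightarrow> complex) \<Rightarrow> nat \<Rightarrow> imat" where
  "Lmat p \<gamma> j = (\<lambda>n m. if m = n then 1 else if n = m+1 then \<gamma> (m*(p+1)+j+1) else 0)"

definition darboux_factorization :: "nat \<Rightarrow> imat \<Rightarrow> complex \<Rightarrow> (nat \<Rightarrow> complex) \<Rightarrow> bool" where
  "darboux_factorization p J C \<gamma> \<longleftrightarrow>
     (\<forall>j\<in>{1..p}. \<forall>k. \<gamma> (k*(p+1)+j+1) \<noteq> 0) \<and>
     (\<lambda>n m. J n m - (if n = m then C else 0)) =
        mprod (map (Lmat p \<gamma>) [1..<p+1] @ [Umat p \<gamma>])"

definition dtrans :: "nat \<Rightarrow> imat \<Rightarrow> complex \<Rightarrow> (nat \<Rightarrow> complex) \<Rightarrow> nat \<Rightarrow> imat" where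
  "dtrans p J C \<gamma> j = (if j = 0 then J else
     (\<lambda>n m. (if n = m then C else 0) +
        mprod (map (Lmat p \<gamma>) [j+1..<p+1] @ [Umat p \<gamma>] @ map (Lmat p \<gamma>) [1..<j+1]) n m))"

definition lin_functional :: "(complex poly \<Rightarrow> complex) \<Rightarrow> bool" where
  "lin_functional \<mu> \<longleftrightarrow> (\<forall>q r. \<mu> (q + r) = \<mu> q + \<mu> r) \<and> (\<forall>c q. \<mu> (smult c q) = c * \<mu> q)"

definition p_orth_vector :: "nat \<Rightarrow> (nat \<Rightarrow> complex poly \<Rightarrow> complex) \<Rightarrow> (nat \<Rightarrow> complex poly) \<Rightarrow> bool" where
  "p_orth_vector p \<nu> Q \<longleftrightarrow>
     (\<forall>r\<in>{1..p}. lin_functional (\<nu> r) \<and>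
        (\<forall>k. (\<forall>n \<ge> k*p + r. \<nu> r (monom 1 k * Q n) = 0) \<and>
             \<nu> r (monom 1 k * Q (k*p + r - 1)) \<noteq> 0))"

definition shift_fun :: "complex \<Rightarrow> (complex poly \<Rightarrow> complex) \<Rightarrow> complex poly \<Rightarrow> complex" where
  "shift_fun C \<mu> = (\<lambda>q. \<mu> ([:-C, 1:] * q))"

end

theory Submission
  imports Defs
begin

definition rowfin :: "imat \<Rightarrow> bool" where
  "rowfin A \<longleftrightarrow> (\<forall>n. finite {k. A n k \<noteq> 0})"

definition band :: "nat \<Rightarrow> nat \<Rightarrow> imat \<Rightarrow> bool" where
  "band a b A \<longleftrightarrow> (\<forall>n m. A n m \<noteq> 0 \<longrightarrow> m \<le> n + a \<and> n \<le> m + b)"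

definition good :: "nat \<Rightarrow> nat \<Rightarrow> imat \<Rightarrow> bool" where
  "good a b A \<longleftrightarrow> band a b A \<and> (\<forall>n. A n (n+a) = 1) \<and> (\<forall>n\<ge>b. A n (n-b) \<noteq> 0)"

definition act :: "imat \<Rightarrow> (nat \<Rightarrow> complex poly) \<Rightarrow> nat \<Rightarrow> complex poly" where
  "act A v n = (\<Sum>k\<in>{k. A n k \<noteq> 0}. smult (A n k) (v k))"

definition hess :: "imat \<Rightarrow> bool" where
  "hess H \<longleftrightarrow> (\<forall>n. H n (n+1) = 1) \<and> (\<forall>n m. n+1 < m \<longrightarrow> H n m = 0)"

lemma good_band: "good a b A \<Longrightarrow> band a b A" by (simp add: good_def)

lemma band_supp: "band a b A \<Longrightarrow> {k. A n k \<noteq> 0} \<subseteq> {..n+a}"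
  unfolding band_def by auto

lemma band_rowfin: "band a b A \<Longrightarrow> rowfin A"
  unfolding rowfin_def by (blast intro: finite_subset[OF band_supp] finite_atMost)

lemma mmul_eq:
  assumes "finite S" "{k. A n k \<noteq> 0} \<subseteq> S"
  shows "mmul A B n m = (\<Sum>k\<in>S. A n k * B k m)"
  unfolding mmul_def by (rule sum.mono_neutral_left[OF assms]) auto

lemma act_eq:
  assumes "finite S" "{k. A n k \<noteq> 0} \<subseteq> S"
  shows "act A v n = (\<Sum>k\<in>S. smult (A n k) (v k))"
  unfolding act_def by (rule sum.mono_neutral_left[OF assms]) auto

lemma supp_mmul:
  "{l. mmul A B n l \<noteq> 0} \<subseteq> (\<Union>k\<in>{k. A n k \<noteq> 0}. {l. B k l \<noteq> 0})"
proof
  fix l assume "l \<in> {l. mmul A B n l \<noteq> 0}"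
  then have "(\<Sum>k\<in>{k. A n k \<noteq> 0}. A n k * B k l) \<noteq> 0" by (simp add: mmul_def)
  then obtain k where "k \<in> {k. A n k \<noteq> 0}" "A n k * B k l \<noteq> 0" by (meson sum.neutral)
  then show "l \<in> (\<Union>k\<in>{k. A n k \<noteq> 0}. {l. B k l \<noteq> 0})" by auto
qed

lemma rowfin_mmul: "rowfin A \<Longrightarrow> rowfin B \<Longrightarrow> rowfin (mmul A B)"
  unfolding rowfin_def using supp_mmul by (meson finite_UN_I finite_subset)

lemma mmul_assoc:
  assumes "rowfin A" "rowfin B"
  shows "mmul (mmul A B) D = mmul A (mmul B D)"
proof (intro ext)
  fix n m
  define S where "S = {k. A n k \<noteq> 0}"
  define T where "T = (\<Union>k\<in>S. {l. B k l \<noteq> 0})"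
  have fS: "finite S" using assms(1) by (simp add: rowfin_def S_def)
  have fT: "finite T" using assms(2) fS by (simp add: rowfin_def T_def)
  have "mmul (mmul A B) D n m = (\<Sum>l\<in>T. mmul A B n l * D l m)"
    by (rule mmul_eq[OF fT]) (use supp_mmul in \<open>simp add: S_def T_def\<close>)
  also have "\<dots> = (\<Sum>l\<in>T. \<Sum>k\<in>S. A n k * B k l * D l m)"
    by (simp add: mmul_def S_def sum_distrib_right)
  also have "\<dots> = (\<Sum>k\<in>S. \<Sum>l\<in>T. A n k * B k l * D l m)" by (rule sum.swap)
  also have "\<dots> = (\<Sum>k\<in>S. A n k * mmul B D k m)"
  proof (rule sum.cong[OF refl])
    fix k assume "k \<in> S"
    have "mmul B D k m = (\<Sum>l\<in>T. B k l * D l m)"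
      by (rule mmul_eq[OF fT]) (use \<open>k\<in>S\<close> in \<open>auto simp: T_def\<close>)
    then show "(\<Sum>l\<in>T. A n k * B k l * D l m) = A n k * mmul B D k m"
      by (simp add: sum_distrib_left mult.assoc)
  qed
  also have "\<dots> = mmul A (mmul B D) n m" by (simp add: mmul_def S_def)
  finally show "mmul (mmul A B) D n m = mmul A (mmul B D) n m" .
qed

lemma smult_sum_r: "smult a (sum f S) = (\<Sum>x\<in>S. smult a (f x))"
  by (induction S rule: infinite_finite_induct) (auto simp: smult_add_right)

lemma act_mmul:
  assumes "rowfin A" "rowfin B"
  shows "act (mmul A B) v n = act A (act B v) n"
proof -
  define S where "S = {k. A n k \<noteq> 0}"
  define T where "T = (\<Union>k\<in>S. {l. B k l \<noteq> 0})"
  have fS: "finite S" using assms(1) by (simp add: rowfin_def S_def)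
  have fT: "finite T" using assms(2) fS by (simp add: rowfin_def T_def)
  have "act (mmul A B) v n = (\<Sum>l\<in>T. smult (mmul A B n l) (v l))"
    by (rule act_eq[OF fT]) (use supp_mmul in \<open>simp add: S_def T_def\<close>)
  also have "\<dots> = (\<Sum>l\<in>T. \<Sum>k\<in>S. smult (A n k * B k l) (v l))"
    by (simp add: mmul_def S_def smult_sum)
  also have "\<dots> = (\<Sum>k\<in>S. \<Sum>l\<in>T. smult (A n k * B k l) (v l))" by (rule sum.swap)
  also have "\<dots> = (\<Sum>k\<in>S. smult (A n k) (act B v k))"
  proof (rule sum.cong[OF refl])
    fix k assume "k \<in> S"
    have "act B v k = (\<Sum>l\<in>T. smult (B k l) (v l))"
      by (rule act_eq[OF fT]) (use \<open>k\<in>S\<close> in \<open>auto simp: T_def\<close>)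
    then show "(\<Sum>l\<in>T. smult (A n k * B k l) (v l)) = smult (A n k) (act B v k)"
      by (simp add: smult_sum_r smult_smult)
  qed
  also have "\<dots> = act A (act B v) n" by (simp add: act_def S_def)
  finally show ?thesis .
qed

lemma rowfin_idm: "rowfin idm"
  unfolding rowfin_def idm_def by simp

lemma mmul_idm_left: "mmul idm Y = Y"
  by (intro ext) (simp add: mmul_def idm_def)

lemma mmul_idm_right: "rowfin A \<Longrightarrow> mmul A idm = A"
  by (intro ext) (auto simp: mmul_def idm_def rowfin_def if_distrib cong: if_cong)

lemma sum_single:
  assumes "finite S" "c \<in> S" "\<And>k. k \<in> S \<Longrightarrow> k \<noteq> c \<Longrightarrow> f k = 0"
  shows "sum f S = f c"
proof -
  have "sum f S = f c + sum f (S - {c})" using assms(1,2) by (rule sum.remove)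
  also have "sum f (S - {c}) = 0" using assms(3) by (intro sum.neutral) auto
  finally show ?thesis by simp
qed

lemma band_mmul:
  assumes "band a1 b1 A" "band a2 b2 B"
  shows "band (a1+a2) (b1+b2) (mmul A B)"
  unfolding band_def
proof (intro allI impI)
  fix n m assume "mmul A B n m \<noteq> 0"
  then obtain k where "A n k \<noteq> 0" "B k m \<noteq> 0" using supp_mmul by blast
  then show "m \<le> n + (a1 + a2) \<and> n \<le> m + (b1 + b2)"
    using assms unfolding band_def by fastforce
qed

lemma mmul_low_edge:
  assumes "band a1 b1 A" "band a2 b2 B" "b1 + b2 \<le> n"
  shows "mmul A B n (n - b1 - b2) = A n (n - b1) * B (n - b1) (n - b1 - b2)"
proof -
  have "mmul A B n (n-b1-b2) = (\<Sum>k\<in>{..n+a1}. A n k * B k (n-b1-b2))"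
    by (rule mmul_eq) (use band_supp[OF assms(1)] in auto)
  also have "\<dots> = A n (n-b1) * B (n-b1) (n-b1-b2)"
  proof (rule sum_single)
    fix k assume "k \<noteq> n - b1"
    show "A n k * B k (n-b1-b2) = 0"
    proof (rule ccontr)
      assume "A n k * B k (n-b1-b2) \<noteq> 0"
      then have "A n k \<noteq> 0" "B k (n-b1-b2) \<noteq> 0" by auto
      then have "n \<le> k + b1"
        using assms(1,2) unfolding band_def by blast
      moreover have "k \<le> n - b1 - b2 + b2" using \<open>B k (n-b1-b2) \<noteq> 0\<close> assms(2)
        unfolding band_def by blast
      ultimately show False using \<open>k \<noteq> n-b1\<close> assms(3) by linarith
    qed
  qed auto
  finally show ?thesis .
qed

lemma mmul_up_edge:
  assumes "band a1 b1 A" "band a2 b2 B"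
  shows "mmul A B n (n + a1 + a2) = A n (n + a1) * B (n + a1) (n + a1 + a2)"
proof -
  have "mmul A B n (n+a1+a2) = (\<Sum>k\<in>{..n+a1}. A n k * B k (n+a1+a2))"
    by (rule mmul_eq) (use band_supp[OF assms(1)] in auto)
  also have "\<dots> = A n (n+a1) * B (n+a1) (n+a1+a2)"
  proof (rule sum_single)
    fix k assume k: "k \<in> {..n+a1}" "k \<noteq> n + a1"
    show "A n k * B k (n+a1+a2) = 0"
    proof (rule ccontr)
      assume "A n k * B k (n+a1+a2) \<noteq> 0"
      then have "B k (n+a1+a2) \<noteq> 0" by auto
      then have "n+a1+a2 \<le> k + a2" using assms(2) unfolding band_def by blast
      then show False using k by auto
    qed
  qed auto
  finally show ?thesis .
qed

lemma good_mmul: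
  assumes "good a1 b1 A" "good a2 b2 B"
  shows "good (a1+a2) (b1+b2) (mmul A B)"
  unfolding good_def
proof (intro conjI allI impI)
  have bA: "band a1 b1 A" and bB: "band a2 b2 B" using assms good_band by auto
  show "band (a1 + a2) (b1 + b2) (mmul A B)" by (rule band_mmul[OF bA bB])
  fix n
  show "mmul A B n (n + (a1 + a2)) = 1"
  proof -
    have "A n (n+a1) = 1" "B (n+a1) (n+a1+a2) = 1" using assms unfolding good_def by auto
    then show ?thesis using mmul_up_edge[OF bA bB, of n] by (simp add: add.assoc)
  qed
  assume n: "b1 + b2 \<le> n"
  have "mmul A B n (n - (b1 + b2)) = A n (n - b1) * B (n - b1) (n - b1 - b2)"
    using mmul_low_edge[OF bA bB n] by (simp add: diff_diff_add)
  moreover have "A n (n - b1) \<noteq> 0" using assms(1) n unfolding good_def by auto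
  moreover have "B (n - b1) (n - b1 - b2) \<noteq> 0"
  proof -
    have "n - b1 \<ge> b2" using n by simp
    then show ?thesis using assms(2) unfolding good_def by blast
  qed
  ultimately show "mmul A B n (n - (b1 + b2)) \<noteq> 0" by simp
qed

lemma good_idm: "good 0 0 idm"
  by (auto simp: good_def band_def idm_def split: if_splits)

lemma rowfin_mprod: "\<forall>M\<in>set Ms. rowfin M \<Longrightarrow> rowfin (mprod Ms)"
  by (induction Ms) (auto simp: mprod_def rowfin_idm rowfin_mmul)

lemma foldr_mmul: "\<forall>M\<in>set Ms. rowfin M \<Longrightarrow> foldr mmul Ms Y = mmul (mprod Ms) Y"
proof (induction Ms)
  case Nil then show ?case by (simp add: mprod_def mmul_idm_left)
next
  case (Cons M Ms)
  have "rowfin (mprod Ms)" using Cons.prems rowfin_mprod by auto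
  then show ?case using Cons by (simp add: mprod_def mmul_assoc)
qed

lemma mprod_snoc: "\<forall>M\<in>set Ms. rowfin M \<Longrightarrow> rowfin M0 \<Longrightarrow> mprod (Ms @ [M0]) = mmul (mprod Ms) M0"
proof -
  assume a: "\<forall>M\<in>set Ms. rowfin M" "rowfin M0"
  have "mprod (Ms @ [M0]) = foldr mmul Ms (mmul M0 idm)" by (simp add: mprod_def)
  also have "\<dots> = mmul (mprod Ms) (mmul M0 idm)" by (rule foldr_mmul[OF a(1)])
  also have "mmul M0 idm = M0" by (rule mmul_idm_right[OF a(2)])
  finally show ?thesis .
qed

lemma band_L: "band 0 1 (Lmat p \<gamma> i)"
  by (auto simp: band_def Lmat_def split: if_splits)

lemma band_U: "band 1 0 (Umat p \<gamma>)"
  by (auto simp: band_def Umat_def split: if_splits)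

lemma good_L:
  assumes "\<forall>j\<in>{1..p}. \<forall>k. \<gamma> (k*(p+1)+j+1) \<noteq> 0" "i \<in> {1..p}"
  shows "good 0 1 (Lmat p \<gamma> i)"
  unfolding good_def
proof (intro conjI allI impI)
  show "band 0 1 (Lmat p \<gamma> i)" by (rule band_L)
  fix n show "Lmat p \<gamma> i n (n + 0) = 1" by (simp add: Lmat_def)
  assume "1 \<le> n"
  then have "Lmat p \<gamma> i n (n - 1) = \<gamma> ((n-1)*(p+1)+i+1)" by (simp add: Lmat_def)
  then show "Lmat p \<gamma> i n (n - 1) \<noteq> 0" using assms by simp
qed

lemma good_foldr_L:
  assumes "\<forall>j\<in>{1..p}. \<forall>k. \<gamma> (k*(p+1)+j+1) \<noteq> 0" "good a b Y" "set xs \<subseteq> {1..p}"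
  shows "good a (length xs + b) (foldr mmul (map (Lmat p \<gamma>) xs) Y)"
  using assms(3)
proof (induction xs)
  case Nil then show ?case using assms(2) by simp
next
  case (Cons x xs)
  then have "good (0+a) (1 + (length xs + b)) (mmul (Lmat p \<gamma> x) (foldr mmul (map (Lmat p \<gamma>) xs) Y))"
    by (intro good_mmul good_L[OF assms(1)]) auto
  then show ?case by simp
qed

lemma act_mult: "act A (\<lambda>k. q * v k) n = q * act A v n"
  by (simp add: act_def sum_distrib_left mult_smult_right)

lemma act_plus:
  assumes "band a b A"
  shows "act (\<lambda>n m. (if n = m then C else 0) + A n m) v n = smult C (v n) + act A v n"
proof -
  have "act (\<lambda>n m. (if n = m then C else 0) + A n m) v n =
      (\<Sum>k\<in>{..n+a}. smult ((if n = k then C else 0) + A n k) (v k))"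
    by (rule act_eq) (use band_supp[OF assms] in \<open>auto split: if_splits\<close>)
  also have "\<dots> = (\<Sum>k\<in>{..n+a}. (if n = k then smult C (v k) else 0)) + (\<Sum>k\<in>{..n+a}. smult (A n k) (v k))"
    by (simp add: smult_add_left sum.distrib if_distrib[of "\<lambda>c. smult c _"] cong: if_cong)
  also have "(\<Sum>k\<in>{..n+a}. (if n = k then smult C (v k) else 0)) = smult C (v n)"
    by simp
  also have "(\<Sum>k\<in>{..n+a}. smult (A n k) (v k)) = act A v n"
    by (rule act_eq[symmetric]) (use band_supp[OF assms] in auto)
  finally show ?thesis .
qed

lemma hpoly_eig:
  assumes "hess H" shows "act H (hpoly H) n = [:0,1:] * hpoly H n"
proof -
  have "act H (hpoly H) n = (\<Sum>k\<in>{..Suc n}. smult (H n k) (hpoly H k))"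
    by (rule act_eq) (use assms in \<open>auto simp: hess_def not_le[symmetric]\<close>)
  also have "\<dots> = hpoly H (Suc n) + (\<Sum>k\<in>{..n}. smult (H n k) (hpoly H k))"
    using assms by (simp add: hess_def)
  also have "\<dots> = [:0,1:] * hpoly H n" by simp
  finally show ?thesis .
qed

lemma hpoly_unique:
  assumes "hess H" "w 0 = 1" "\<And>n. act H w n = [:0,1:] * w n"
  shows "w n = hpoly H n"
proof (induction n rule: less_induct)
  case (less n)
  show ?case
  proof (cases n)
    case 0 then show ?thesis using assms(2) by simp
  next
    case (Suc m)
    have "act H w m = (\<Sum>k\<in>{..Suc m}. smult (H m k) (w k))"
      by (rule act_eq) (use assms(1) in \<open>auto simp: hess_def not_le[symmetric]\<close>)
    also have "\<dots> = w (Suc m) + (\<Sum>k\<in>{..m}. smult (H m k) (w k))"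
      using assms(1) by (simp add: hess_def)
    also have "(\<Sum>k\<in>{..m}. smult (H m k) (w k)) = (\<Sum>k\<in>{..m}. smult (H m k) (hpoly H k))"
      using less Suc by (intro sum.cong) auto
    finally have "w (Suc m) = [:0,1:] * w m - (\<Sum>k\<in>{..m}. smult (H m k) (hpoly H k))"
      using assms(3)[of m] by (simp add: eq_diff_eq)
    then show ?thesis using less[of m] Suc by simp
  qed
qed

lemma lin_sum:
  assumes "lin_functional \<mu>" "finite S"
  shows "\<mu> (\<Sum>k\<in>S. smult (c k) (q k)) = (\<Sum>k\<in>S. c k * \<mu> (q k))"
  using assms(2)
proof induction
  case empty
  have "\<mu> (smult 0 0) = 0 * \<mu> 0" using assms(1) unfolding lin_functional_def by blast
  then show ?case by simp
next
  case (insert x F) then show ?case using assms(1) unfolding lin_functional_def by simp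
qed

lemma lin_poly: "[:-C,1:] * q = [:0,1:] * q - smult (C::complex) q"
proof -
  have "[:-C,1:] * q = - smult C q + [:0,1:] * q" by simp
  then show ?thesis by simp
qed

lemma act_L:
  assumes "1 \<le> n"
  shows "act (Lmat p \<gamma> i) v n = v n + smult (\<gamma> ((n-1)*(p+1)+i+1)) (v (n-1))"
proof -
  have nn: "n - 1 \<noteq> n" using assms by simp
  have "act (Lmat p \<gamma> i) v n = (\<Sum>k\<in>{n-1, n}. smult (Lmat p \<gamma> i n k) (v k))"
    by (rule act_eq) (auto simp: Lmat_def split: if_splits)
  also have "\<dots> = smult (Lmat p \<gamma> i n (n-1)) (v (n-1)) + smult (Lmat p \<gamma> i n n) (v n)"
    using nn by simp
  also have "Lmat p \<gamma> i n (n-1) = \<gamma> ((n-1)*(p+1)+i+1)"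
    using assms nn unfolding Lmat_def by simp
  also have "Lmat p \<gamma> i n n = 1" unfolding Lmat_def by simp
  also have "smult (\<gamma> ((n-1)*(p+1)+i+1)) (v (n-1)) + smult 1 (v n) = v n + smult (\<gamma> ((n-1)*(p+1)+i+1)) (v (n-1))"
    by (simp add: add.commute)
  finally show ?thesis .
qed

lemma act_L0: "act (Lmat p \<gamma> i) v 0 = v 0"
proof -
  have "act (Lmat p \<gamma> i) v 0 = (\<Sum>k\<in>{0}. smult (Lmat p \<gamma> i 0 k) (v k))"
    by (rule act_eq) (auto simp: Lmat_def split: if_splits)
  then show ?thesis by (simp add: Lmat_def)
qed

theorem lemma5:
  fixes p :: nat and J :: imat and C :: complex and \<gamma> :: "nat \<Rightarrow> complex"
    and \<nu> :: "nat \<Rightarrow> nat \<Rightarrow> complex poly \<Rightarrow> complex"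
  assumes "p \<ge> 1"
    and "banded_hessenberg p J"
    and "\<forall>n\<ge>1. poly (hpoly J n) C \<noteq> 0"
    and "darboux_factorization p J C \<gamma>"
    and "\<forall>j\<le>p. p_orth_vector p (\<nu> j) (hpoly (dtrans p J C \<gamma> j))"
  shows "\<forall>j<p.
     p_orth_vector p (\<lambda>r. if r < p then \<nu> (j+1) r else shift_fun C (\<nu> j 1))
        (hpoly (dtrans p J C \<gamma> (j+1)))
   \<and> p_orth_vector p (\<lambda>r. if r = 1 then \<nu> j 1 else \<nu> (j+1) (r - 1))
        (hpoly (dtrans p J C \<gamma> j))"
proof -
  define L where "L = Lmat p \<gamma>"
  define U where "U = Umat p \<gamma>"
  from assms(4) have gnz: "\<forall>j\<in>{1..p}. \<forall>k. \<gamma> (k*(p+1)+j+1) \<noteq> 0"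
    and JC: "(\<lambda>n m. J n m - (if n = m then C else 0)) = mprod (map L [1..<p+1] @ [U])"
    unfolding darboux_factorization_def L_def U_def by auto
  have rfL: "rowfin (L i)" for i unfolding L_def using band_L band_rowfin by blast
  have rfU: "rowfin U" unfolding U_def using band_U band_rowfin by blast
  have rfLs: "\<forall>M\<in>set (map L xs). rowfin M" for xs using rfL by auto
  define Lp where "Lp = mprod (map L [1..<p+1])"
  have gLp: "good 0 p Lp"
  proof -
    have "good 0 (length [1..<p+1] + 0) (foldr mmul (map L [1..<p+1]) idm)"
      unfolding L_def by (rule good_foldr_L[OF gnz good_idm]) auto
    then show ?thesis unfolding Lp_def mprod_def length_upt by simp
  qed
  have JLU: "mprod (map L [1..<p+1] @ [U]) = mmul Lp U"
    unfolding Lp_def by (rule mprod_snoc[OF rfLs rfU])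
  have Udiag: "U n n \<noteq> 0" for n
  proof -
    have "J (n+p) n \<noteq> 0" using assms(2) by (simp add: banded_hessenberg_def)
    moreover have "J (n+p) n = mmul Lp U (n+p) n"
      using fun_cong[OF fun_cong[OF JC, of "n+p"], of n] JLU assms(1) by simp
    moreover have "mmul Lp U (n+p) (n+p-p-0) = Lp (n+p) (n+p-p) * U (n+p-p) (n+p-p-0)"
      by (rule mmul_low_edge[OF good_band[OF gLp] band_U[of p \<gamma>, folded U_def]]) simp
    ultimately show ?thesis by simp
  qed
  have gU: "good 1 0 U"
    unfolding good_def
  proof (intro conjI allI impI)
    show "band 1 0 U" unfolding U_def by (rule band_U)
    fix n show "U n (n + 1) = 1" by (simp add: U_def Umat_def)
    show "U n (n - 0) \<noteq> 0" using Udiag[of n] by simp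
  qed
  define A where "A = (\<lambda>j. mprod (map L [j+1..<p+1] @ [U] @ map L [1..<j+1]))"
  have A_foldr: "A j = foldr mmul (map L [j+1..<p+1]) (mmul U (mprod (map L [1..<j+1])))" for j
    by (simp add: A_def mprod_def)
  have gA: "good 1 p (A j)" if "j \<le> p" for j
  proof -
    have "good 0 (length [1..<j+1] + 0) (foldr mmul (map (Lmat p \<gamma>) [1..<j+1]) idm)"
      by (rule good_foldr_L[OF gnz good_idm]) (use that in auto)
    then have "good 0 j (mprod (map L [1..<j+1]))" unfolding mprod_def length_upt L_def by simp
    then have "good (1+0) (0+j) (mmul U (mprod (map L [1..<j+1])))" by (rule good_mmul[OF gU])
    then have "good 1 (length [j+1..<p+1] + j) (A j)" unfolding A_foldr L_def
      by (intro good_foldr_L[OF gnz]) auto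
    then show ?thesis using that unfolding length_upt by simp
  qed
  have dA: "dtrans p J C \<gamma> j = (\<lambda>n m. (if n = m then C else 0) + A j n m)" if "j \<le> p" for j
  proof (cases "j = 0")
    case True
    have "A 0 n m = J n m - (if n = m then C else 0)" for n m
    proof -
      have "A 0 = mprod (map L [1..<p+1] @ [U])" unfolding A_def by simp
      then show ?thesis using fun_cong[OF fun_cong[OF JC, of n], of m] by simp
    qed
    then show ?thesis using True by (simp add: dtrans_def)
  next
    case False then show ?thesis unfolding dtrans_def A_def L_def U_def by (simp del: upt_Suc)
  qed
  have hd: "hess (dtrans p J C \<gamma> j)" if "j \<le> p" for j
  proof -
    have g: "good 1 p (A j)" by (rule gA[OF that])
    show ?thesis unfolding dA[OF that] hess_def
    proof (intro conjI allI impI)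
      fix n :: nat show "(if n = n + 1 then C else 0) + A j n (n + 1) = 1" using g by (simp add: good_def)
    next
      fix n m :: nat assume "n + 1 < m"
      moreover have "A j n m \<noteq> 0 \<Longrightarrow> m \<le> n + 1" using g unfolding good_def band_def by blast
      ultimately show "(if n = m then C else 0) + A j n m = 0" by fastforce
    qed
  qed
  define v where "v = (\<lambda>j. hpoly (dtrans p J C \<gamma> j))"
  have eigA: "act (A j) (v j) n = [:-C,1:] * v j n" if "j \<le> p" for j n
  proof -
    have "act (dtrans p J C \<gamma> j) (v j) n = [:0,1:] * v j n" by (simp add: v_def hpoly_eig[OF hd[OF that]])
    moreover have "act (dtrans p J C \<gamma> j) (v j) n = smult C (v j n) + act (A j) (v j) n"
      unfolding dA[OF that] by (rule act_plus[OF good_band[OF gA[OF that]]])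
    ultimately show ?thesis by (simp add: lin_poly eq_diff_eq add.commute)
  qed
  show ?thesis
  proof (intro allI impI)
    fix j assume jp: "j < p"
    define B where "B = mprod (map L [j+2..<p+1] @ [U] @ map L [1..<j+1])"
    have gB: "good 1 (p-1) B"
    proof -
      have "good 0 (length [1..<j+1] + 0) (foldr mmul (map (Lmat p \<gamma>) [1..<j+1]) idm)"
        by (rule good_foldr_L[OF gnz good_idm]) (use jp in auto)
      then have "good 0 j (mprod (map L [1..<j+1]))" unfolding mprod_def length_upt L_def by simp
      then have "good (1+0) (0+j) (mmul U (mprod (map L [1..<j+1])))" by (rule good_mmul[OF gU])
      then have "good 1 (length [j+2..<p+1] + j) (foldr mmul (map L [j+2..<p+1]) (mmul U (mprod (map L [1..<j+1]))))"
        unfolding L_def by (intro good_foldr_L[OF gnz]) auto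
      moreover have "B = foldr mmul (map L [j+2..<p+1]) (mmul U (mprod (map L [1..<j+1])))"
        by (simp add: B_def mprod_def)
      ultimately show ?thesis using jp unfolding length_upt by simp
    qed
    have rfB: "rowfin B" using gB good_band band_rowfin by blast
    have AjB: "A j = mmul (L (j+1)) B"
    proof -
      have "[j+1..<p+1] = (j+1) # [j+2..<p+1]" using jp by (simp add: upt_conv_Cons)
      then show ?thesis by (simp add: A_def B_def mprod_def)
    qed
    have Aj1: "A (j+1) = mmul B (L (j+1))"
    proof -
      have "[1..<j+1+1] = [1..<j+1] @ [j+1]" by simp
      then have "A (j+1) = mprod ((map L [j+2..<p+1] @ [U] @ map L [1..<j+1]) @ [L (j+1)])"
        by (simp add: A_def)
      also have "\<dots> = mmul B (L (j+1))" unfolding B_def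
        by (rule mprod_snoc) (use rfL rfU in auto)
      finally show ?thesis .
    qed
    define w where "w = act (L (j+1)) (v (j+1))"
    have actBw: "act B w k = [:-C,1:] * v (j+1) k" for k
    proof -
      have "act B w k = act (mmul B (L (j+1))) (v (j+1)) k"
        unfolding w_def by (rule act_mmul[symmetric, OF rfB rfL])
      also have "\<dots> = [:-C,1:] * v (j+1) k" using eigA[of "j+1" k] jp Aj1 by simp
      finally show ?thesis .
    qed
    have eigw: "act (dtrans p J C \<gamma> j) w n = [:0,1:] * w n" for n
    proof -
      have "act (dtrans p J C \<gamma> j) w n = smult C (w n) + act (A j) w n"
      proof -
        have jle: "j \<le> p" using jp by simp
        show ?thesis unfolding dA[OF jle] by (rule act_plus[OF good_band[OF gA[OF jle]]])
      qed
      also have "act (A j) w n = act (L (j+1)) (act B w) n"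
        unfolding AjB by (rule act_mmul[OF rfL rfB])
      also have "act B w = (\<lambda>k. [:-C,1:] * v (j+1) k)" by (rule ext) (rule actBw)
      also have "act (L (j+1)) (\<lambda>k. [:-C,1:] * v (j+1) k) n = [:-C,1:] * w n"
        unfolding w_def by (rule act_mult)
      finally have "act (dtrans p J C \<gamma> j) w n = smult C (w n) + [:-C,1:] * w n" .
      then show ?thesis unfolding lin_poly by simp
    qed
    have w0: "w 0 = 1" unfolding w_def L_def act_L0 by (simp add: v_def)
    have vw: "v j n = w n" for n
    proof -
      have jle: "j \<le> p" using jp by simp
      have "w n = hpoly (dtrans p J C \<gamma> j) n" by (rule hpoly_unique[OF hd[OF jle] w0 eigw])
      then show ?thesis by (simp add: v_def)
    qed
    have R1: "v j n = v (j+1) n + smult (\<gamma> ((n-1)*(p+1)+(j+1)+1)) (v (j+1) (n-1))" if "1 \<le> n" for n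
    proof -
      have "w n = v (j+1) n + smult (\<gamma> ((n-1)*(p+1)+(j+1)+1)) (v (j+1) (n-1))"
        unfolding w_def L_def by (rule act_L[OF that])
      then show ?thesis using vw[of n] by simp
    qed
    have R2: "act B (v j) n = [:-C,1:] * v (j+1) n" for n
    proof -
      have "v j = w" using vw by (rule ext)
      then show ?thesis using actBw by simp
    qed
    have R1nz: "\<gamma> ((n-1)*(p+1)+(j+1)+1) \<noteq> 0" for n
      by (rule gnz[rule_format]) (use jp in auto)
    have oj: "p_orth_vector p (\<nu> j) (v j)" and oj1: "p_orth_vector p (\<nu> (j+1)) (v (j+1))"
      using assms(5) jp unfolding v_def by auto
    have main: "p_orth_vector p (\<lambda>r. if r < p then \<nu> (j+1) r else shift_fun C (\<nu> j 1))
        (v (j+1))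
   \<and> p_orth_vector p (\<lambda>r. if r = 1 then \<nu> j 1 else \<nu> (j+1) (r - 1))
        (v j)"
    proof
      show "p_orth_vector p (\<lambda>r. if r < p then \<nu> (j+1) r else shift_fun C (\<nu> j 1)) (v (j+1))"
        unfolding p_orth_vector_def
      proof (intro ballI)
        fix r assume r: "r \<in> {1..p}"
        show "lin_functional (if r < p then \<nu> (j+1) r else shift_fun C (\<nu> j 1)) \<and>
          (\<forall>k. (\<forall>n\<ge>k * p + r. (if r < p then \<nu> (j+1) r else shift_fun C (\<nu> j 1)) (monom 1 k * v (j+1) n) = 0) \<and>
               (if r < p then \<nu> (j+1) r else shift_fun C (\<nu> j 1)) (monom 1 k * v (j+1) (k * p + r - 1)) \<noteq> 0)"
        proof (cases "r < p")
          case True then show ?thesis using bspec[OF oj1[unfolded p_orth_vector_def] r] by simp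
        next
          case False
          then have rp: "r = p" using r by auto
          have oj1': "lin_functional (\<nu> j 1)"
            "\<And>k n. n \<ge> k*p+1 \<Longrightarrow> \<nu> j 1 (monom 1 k * v j n) = 0"
            "\<And>k. \<nu> j 1 (monom 1 k * v j (k*p)) \<noteq> 0"
          proof -
            have "1 \<in> {1..p}" using assms(1) by simp
            then have o1: "lin_functional (\<nu> j 1) \<and> (\<forall>k. (\<forall>n\<ge>k*p+1. \<nu> j 1 (monom 1 k * v j n) = 0)
                 \<and> \<nu> j 1 (monom 1 k * v j (k*p+1-1)) \<noteq> 0)"
              using oj unfolding p_orth_vector_def by blast
            show "lin_functional (\<nu> j 1)" using o1 by blast
            show "\<And>k n. n \<ge> k*p+1 \<Longrightarrow> \<nu> j 1 (monom 1 k * v j n) = 0" using o1 by blast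
            show "\<And>k. \<nu> j 1 (monom 1 k * v j (k*p)) \<noteq> 0" using o1 by simp
          qed
          have linS: "lin_functional (shift_fun C (\<nu> j 1))"
            using oj1'(1) unfolding lin_functional_def shift_fun_def
            by (simp add: distrib_left mult_smult_right)
          have key: "shift_fun C (\<nu> j 1) (monom 1 k * v (j+1) n) =
              (\<Sum>m\<in>{m. B n m \<noteq> 0}. B n m * \<nu> j 1 (monom 1 k * v j m))" for k n
          proof -
            have "[:-C,1:] * (monom 1 k * v (j+1) n) = monom 1 k * act B (v j) n"
              by (simp add: R2 mult.left_commute)
            also have "\<dots> = (\<Sum>m\<in>{m. B n m \<noteq> 0}. smult (B n m) (monom 1 k * v j m))"
              by (simp add: act_def sum_distrib_left mult_smult_right)
            finally show ?thesis
              using lin_sum[OF oj1'(1), of "{m. B n m \<noteq> 0}"] rfB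
              by (simp add: shift_fun_def rowfin_def)
          qed
          have bB: "B n m \<noteq> 0 \<Longrightarrow> n \<le> m + (p - 1)" for n m
            using gB unfolding good_def band_def by blast
          show ?thesis
          proof (simp only: False if_False, intro conjI allI impI linS)
            fix k n assume n: "k * p + r \<le> n"
            show "shift_fun C (\<nu> j 1) (monom 1 k * v (j + 1) n) = 0"
              unfolding key
            proof (rule sum.neutral, intro ballI)
              fix m assume "m \<in> {m. B n m \<noteq> 0}"
              then have "n \<le> m + (p-1)" using bB by auto
              then have "m \<ge> k*p+1" using n rp assms(1) by linarith
              then show "B n m * \<nu> j 1 (monom 1 k * v j m) = 0" using oj1'(2) by simp
            qed
          next
            fix k
            define n where "n = k*p+r-1"
            have nkp: "n - (p-1) = k*p" "p - 1 \<le> n" using rp assms(1) by (auto simp: n_def)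
            have Bnz: "B n (k*p) \<noteq> 0" using gB nkp unfolding good_def by metis
            have "shift_fun C (\<nu> j 1) (monom 1 k * v (j + 1) n) = B n (k*p) * \<nu> j 1 (monom 1 k * v j (k*p))"
              unfolding key
            proof (rule sum_single)
              show "finite {m. B n m \<noteq> 0}" using rfB by (simp add: rowfin_def)
              show "k*p \<in> {m. B n m \<noteq> 0}" using Bnz by simp
              fix m assume m: "m \<in> {m. B n m \<noteq> 0}" "m \<noteq> k*p"
              then have "n \<le> m + (p-1)" using bB by auto
              then have "m \<ge> k*p+1" using m nkp by linarith
              then show "B n m * \<nu> j 1 (monom 1 k * v j m) = 0" using oj1'(2) by simp
            qed
            then show "shift_fun C (\<nu> j 1) (monom 1 k * v (j + 1) (k * p + r - 1)) \<noteq> 0"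
              using Bnz oj1'(3)[of k] by (simp add: n_def)
          qed
        qed
      qed
    next
      show "p_orth_vector p (\<lambda>r. if r = 1 then \<nu> j 1 else \<nu> (j+1) (r - 1)) (v j)"
        unfolding p_orth_vector_def
      proof (intro ballI)
        fix r assume r: "r \<in> {1..p}"
        show "lin_functional (if r = 1 then \<nu> j 1 else \<nu> (j+1) (r - 1)) \<and>
          (\<forall>k. (\<forall>n\<ge>k * p + r. (if r = 1 then \<nu> j 1 else \<nu> (j+1) (r - 1)) (monom 1 k * v j n) = 0) \<and>
               (if r = 1 then \<nu> j 1 else \<nu> (j+1) (r - 1)) (monom 1 k * v j (k * p + r - 1)) \<noteq> 0)"
        proof (cases "r = 1")
          case True then show ?thesis using bspec[OF oj[unfolded p_orth_vector_def] r] by simp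
        next
          case False
          define \<mu> where "\<mu> = \<nu> (j+1) (r-1)"
          have r1: "r - 1 \<in> {1..p}" using r False by auto
          have o: "lin_functional \<mu>"
            "\<And>k n. n \<ge> k*p+(r-1) \<Longrightarrow> \<mu> (monom 1 k * v (j+1) n) = 0"
            "\<And>k. \<mu> (monom 1 k * v (j+1) (k*p+(r-1)-1)) \<noteq> 0"
            using oj1 r1 unfolding p_orth_vector_def \<mu>_def by auto
          have exp: "\<mu> (monom 1 k * v j n) = \<mu> (monom 1 k * v (j+1) n)
              + \<gamma> ((n-1)*(p+1)+(j+1)+1) * \<mu> (monom 1 k * v (j+1) (n-1))" if "1 \<le> n" for k n
            using o(1) unfolding R1[OF that] lin_functional_def
            by (simp add: distrib_left mult_smult_right)
          show ?thesis
          proof (simp only: False if_False, fold \<mu>_def, intro conjI allI impI o(1))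
            fix k n assume n: "k * p + r \<le> n"
            then have "1 \<le> n" using r by auto
            have a1: "n \<ge> k*p+(r-1)" "n - 1 \<ge> k*p+(r-1)" using n False r by auto
            show "\<mu> (monom 1 k * v j n) = 0" unfolding exp[OF \<open>1 \<le> n\<close>]
              using o(2)[OF a1(1)] o(2)[OF a1(2)] by simp
          next
            fix k
            have n1: "1 \<le> k*p+r-1" using r False by auto
            have a2: "k*p+r-1 \<ge> k*p+(r-1)" using r by auto
            have z: "\<mu> (monom 1 k * v (j+1) (k*p+r-1)) = 0" using o(2)[OF a2] .
            have r2: "2 \<le> r" using r False by auto
            have e: "k*p+r-1-1 = k*p+(r-1)-1" using r2 by linarith
            have nz: "\<mu> (monom 1 k * v (j+1) (k*p+r-1-1)) \<noteq> 0" unfolding e by (rule o(3))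
            have g: "\<gamma> ((k*p+r-1-1)*(p+1)+(j+1)+1) \<noteq> 0" by (rule R1nz)
            show "\<mu> (monom 1 k * v j (k * p + r - 1)) \<noteq> 0"
              unfolding exp[OF n1] z using nz g by simp
          qed
        qed
      qed
    qed
    then show "p_orth_vector p (\<lambda>r. if r < p then \<nu> (j+1) r else shift_fun C (\<nu> j 1))
        (hpoly (dtrans p J C \<gamma> (j+1)))
   \<and> p_orth_vector p (\<lambda>r. if r = 1 then \<nu> j 1 else \<nu> (j+1) (r - 1))
        (hpoly (dtrans p J C \<gamma> j))" by (simp only: v_def)
  qed
qed

end
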